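(* Let $i,j\in[s]$ with $i\neq j$. Then there is no homomorphism from $F_i^{\bullet\bullet}$ to $F_j^{\bullet\bullet}$ (both viewed as ordinary digraphs).
   Context: All digraphs are finite and loopless; a tournament is a digraph in which every pair of distinct vertices is joined by exactly one arc. A homomorphism from a digraph $F$ to a digraph $H$ is a map $\varphi:V(F)\to V(H)$ with $(\varphi(u),\varphi(v))\in E(H)$ whenever $(u,v)\in E(F)$. Construction of $F_i^{\bullet\bullet}$: fix $s\in\mathbb{N}^+$, a positive integer $m$, and a tournament $F_0$ on vertex set $[m]$ satisfying: (I) every vertex has out-degree and in-degree at most $2m/3$; (II) there are no disjoint $A_1,A_2\subseteq[m]$ with $|A_1|=|A_2|=\lceil\sqrt m\,\rceil$ such that $(a_1,a_2)$ is an arc for all $a_1\in A_1,a_2\in A_2$; (III) for every $S\subseteq[m]$ with $|S|\ge 2m/13-\sqrt m$, $F_0[S]$ contains a directed cycle. Let $k_1,\dots,k_s$ be integers in the open interval $(2m/3+2,\,5m/6)$ with $k_i>k_{i+1}+1$ for $1\le i<s$. For $i\in[s]$, $F_i^{\bullet\bullet}$ is the digraph on vertex set $[m]\cup\{z_i,w_i\}$ ($z_i,w_i$ two new vertices, called roots) whose arcs are all arcs of $F_0$, together with the arcs $z_i\to v$ and $v\to w_i$ for every $1\le v\le k_i$, and the arcs $u\to z_i$ and $w_i\to u$ for every $k_i<u\le m$. There is no arc between $z_i$ and $w_i$. *)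

theory Defs
  imports Complex_Main
begin

datatype vtx = Base nat | Zr | Wr

type_synonym 'a digraph = "'a set \<times> ('a \<times> 'a) set"

definition is_hom :: "'a digraph \<Rightarrow> 'b digraph \<Rightarrow> ('a \<Rightarrow> 'b) \<Rightarrow> bool" where
  "is_hom F H \<phi> \<longleftrightarrow> (\<forall>v\<in>fst F. \<phi> v \<in> fst H) \<and>
     (\<forall>u v. (u, v) \<in> snd F \<longrightarrow> (\<phi> u, \<phi> v) \<in> snd H)"

definition is_tournament :: "'a set \<Rightarrow> ('a \<times> 'a) set \<Rightarrow> bool" where
  "is_tournament V E \<longleftrightarrow> E \<subseteq> V \<times> V \<and> (\<forall>v. (v, v) \<notin> E) \<and>
     (\<forall>u\<in>V. \<forall>v\<in>V. u \<noteq> v \<longrightarrow> ((u, v) \<in> E \<longleftrightarrow> (v, u) \<notin> E))"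

definition has_dicycle_in :: "('a \<times> 'a) set \<Rightarrow> 'a set \<Rightarrow> bool" where
  "has_dicycle_in E S \<longleftrightarrow> (\<exists>xs. 2 \<le> length xs \<and> distinct xs \<and> set xs \<subseteq> S \<and>
     (\<forall>i < length xs. (xs ! i, xs ! (Suc i mod length xs)) \<in> E))"

definition F0_ok :: "nat \<Rightarrow> (nat \<times> nat) set \<Rightarrow> bool" where
  "F0_ok m E \<longleftrightarrow> is_tournament {1..m} E \<and>
    (\<forall>u\<in>{1..m}. real (card {v. (u, v) \<in> E}) \<le> 2 * real m / 3 \<and>
                 real (card {v. (v, u) \<in> E}) \<le> 2 * real m / 3) \<and>
    \<not> (\<exists>A1 A2. A1 \<subseteq> {1..m} \<and> A2 \<subseteq> {1..m} \<and> A1 \<inter> A2 = {} \<and>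
          int (card A1) = \<lceil>sqrt (real m)\<rceil> \<and> int (card A2) = \<lceil>sqrt (real m)\<rceil> \<and>
          (\<forall>a1\<in>A1. \<forall>a2\<in>A2. (a1, a2) \<in> E)) \<and>
    (\<forall>S. S \<subseteq> {1..m} \<and> real (card S) \<ge> 2 * real m / 13 - sqrt (real m) \<longrightarrow>
          has_dicycle_in (E \<inter> (S \<times> S)) S)"

definition Fbb :: "nat \<Rightarrow> (nat \<times> nat) set \<Rightarrow> nat \<Rightarrow> vtx digraph" where
  "Fbb m E k =
    (Base ` {1..m} \<union> {Zr, Wr},
     {(Base u, Base v) | u v. (u, v) \<in> E} \<union>
     {(Zr, Base v) | v. 1 \<le> v \<and> v \<le> k} \<union> {(Base v, Wr) | v. 1 \<le> v \<and> v \<le> k} \<union>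
     {(Base u, Zr) | u. k < u \<and> u \<le> m} \<union> {(Wr, Base u) | u. k < u \<and> u \<le> m})"

end

theory Submission
  imports Defs
begin

lemma arcs_simps:
  "(Base u, Base v) \<in> snd (Fbb m E k) \<longleftrightarrow> (u, v) \<in> E"
  "(Zr, Base v) \<in> snd (Fbb m E k) \<longleftrightarrow> 1 \<le> v \<and> v \<le> k"
  "(Base v, Wr) \<in> snd (Fbb m E k) \<longleftrightarrow> 1 \<le> v \<and> v \<le> k"
  "(Base u, Zr) \<in> snd (Fbb m E k) \<longleftrightarrow> k < u \<and> u \<le> m"
  "(Wr, Base u) \<in> snd (Fbb m E k) \<longleftrightarrow> k < u \<and> u \<le> m"
  "(Zr, Zr) \<notin> snd (Fbb m E k)" "(Zr, Wr) \<notin> snd (Fbb m E k)"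
  "(Wr, Zr) \<notin> snd (Fbb m E k)" "(Wr, Wr) \<notin> snd (Fbb m E k)"
  "(Base u, Base v) \<in> snd (Fbb m E k) \<longleftrightarrow> (u, v) \<in> E"
  "(Base v, Zr) \<in> snd (Fbb m E k) \<longleftrightarrow> k < v \<and> v \<le> m"
  "(Zr, Base v) \<in> snd (Fbb m E k) \<longleftrightarrow> 1 \<le> v \<and> v \<le> k"
  by (auto simp: Fbb_def)

lemma verts: "fst (Fbb m E k) = Base ` {1..m} \<union> {Zr, Wr}"
  by (simp add: Fbb_def)

lemma card_verts: "card (fst (Fbb m E k)) = m + 2"
proof -
  have "card (Base ` {1..m}) = m" by (simp add: card_image inj_on_def)
  moreover have "Base ` {1..m} \<inter> {Zr, Wr} = {}" by auto
  ultimately show ?thesis unfolding verts by (simp add: card_Un_disjoint)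
qed

lemma core:
  assumes tour: "is_tournament {1..m} E"
    and a1: "1 \<le> a" and am: "a \<le> m" and bm: "b \<le> m" and ab: "a \<noteq> b" and abm: "a + b > m"
    and hom: "is_hom (Fbb m E a) (Fbb m E b) \<phi>"
  shows False
proof -
  let ?A = "snd (Fbb m E a)" and ?B = "snd (Fbb m E b)"
  have Esub: "E \<subseteq> {1..m} \<times> {1..m}" and Eirr: "\<And>v. (v,v) \<notin> E"
    and Etot: "\<And>u v. u \<in> {1..m} \<Longrightarrow> v \<in> {1..m} \<Longrightarrow> u \<noteq> v \<Longrightarrow> (u,v) \<in> E \<longleftrightarrow> (v,u) \<notin> E"
    using tour unfolding is_tournament_def by blast+
  have arc: "\<And>x y. (x,y) \<in> ?A \<Longrightarrow> (\<phi> x, \<phi> y) \<in> ?B"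
    using hom unfolding is_hom_def by blast
  have vin: "\<And>x. x \<in> fst (Fbb m E a) \<Longrightarrow> \<phi> x \<in> fst (Fbb m E b)"
    using hom unfolding is_hom_def by blast
  have noloop: "\<And>x. (x,x) \<notin> ?B"
  proof -
    fix x show "(x,x) \<notin> ?B" using Eirr by (cases x) (auto simp: arcs_simps)
  qed
  have nodigon: "\<And>x y. (x,y) \<in> ?B \<Longrightarrow> (y,x) \<notin> ?B"
  proof -
    fix x y assume "(x,y) \<in> ?B"
    then show "(y,x) \<notin> ?B"
    proof (cases x; cases y)
      fix u v assume xy: "x = Base u" "y = Base v" "(x,y) \<in> ?B"
      then have uv: "(u,v) \<in> E" by (simp add: arcs_simps)
      have "u \<noteq> v" using uv Eirr by auto
      moreover have "u \<in> {1..m}" "v \<in> {1..m}" using uv Esub by auto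
      ultimately have "(v,u) \<notin> E" using Etot uv by blast
      then show ?thesis using xy by (simp add: arcs_simps)
    qed (auto simp: arcs_simps)
  qed
  define adj :: "(vtx \<times> vtx) set \<Rightarrow> vtx \<Rightarrow> vtx \<Rightarrow> bool" where "adj G x y \<longleftrightarrow> (x,y) \<in> G \<or> (y,x) \<in> G" for G x y
  have adjne: "\<And>x y. adj ?A x y \<Longrightarrow> \<phi> x \<noteq> \<phi> y"
  proof
    fix x y assume "adj ?A x y" and eq: "\<phi> x = \<phi> y"
    then have "(\<phi> x, \<phi> y) \<in> ?B \<or> (\<phi> y, \<phi> x) \<in> ?B" unfolding adj_def using arc by blast
    then show False using eq noloop by auto
  qed
  have adjB: "\<And>x y. adj ?A x y \<Longrightarrow> adj ?B (\<phi> x) (\<phi> y)"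
    using arc unfolding adj_def by blast
  have zw: "\<phi> Zr \<noteq> \<phi> Wr"
  proof
    assume eq: "\<phi> Zr = \<phi> Wr"
    have "(Zr, Base 1) \<in> ?A" "(Base 1, Wr) \<in> ?A" using a1 by (auto simp: arcs_simps)
    then have "(\<phi> Zr, \<phi> (Base 1)) \<in> ?B" "(\<phi> (Base 1), \<phi> Wr) \<in> ?B" using arc by blast+
    then show False using eq nodigon by simp
  qed
  have adjBase: "\<And>u x. u \<in> {1..m} \<Longrightarrow> x \<in> fst (Fbb m E a) \<Longrightarrow> x \<noteq> Base u \<Longrightarrow> adj ?A (Base u) x"
  proof -
    fix u x assume u: "u \<in> {1..m}" and x: "x \<in> fst (Fbb m E a)" and ne: "x \<noteq> Base u"
    show "adj ?A (Base u) x"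
    proof (cases x)
      case (Base v)
      then have "v \<in> {1..m}" "u \<noteq> v" using x ne by (auto simp: verts)
      then have "(u,v) \<in> E \<or> (v,u) \<in> E" using u Etot by blast
      then show ?thesis using Base unfolding adj_def by (auto simp: arcs_simps)
    qed (use u in \<open>auto simp: adj_def arcs_simps\<close>)
  qed
  have inj: "inj_on \<phi> (fst (Fbb m E a))"
  proof (rule inj_onI)
    fix x y assume x: "x \<in> fst (Fbb m E a)" and y: "y \<in> fst (Fbb m E a)" and eq: "\<phi> x = \<phi> y"
    show "x = y"
    proof (rule ccontr)
      assume ne: "x \<noteq> y"
      show False
      proof (cases "\<exists>u. x = Base u")
        case True
        then obtain u where "x = Base u" by blast
        then show False using adjBase[of u y] adjne x y ne eq by (auto simp: verts)
      next
        case False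
        show False
        proof (cases "\<exists>u. y = Base u")
          case True
          then obtain u where "y = Base u" by blast
          then show False using adjBase[of u x] adjne[of y x] x y ne eq
            by (auto simp: verts adj_def)
        next
          case False2: False
          then show False using False x y ne eq zw by (auto simp: verts)
        qed
      qed
    qed
  qed
  have img: "\<phi> ` fst (Fbb m E a) = fst (Fbb m E b)"
  proof (rule card_subset_eq)
    show "finite (fst (Fbb m E b))" by (simp add: verts)
    show "\<phi> ` fst (Fbb m E a) \<subseteq> fst (Fbb m E b)" using vin by blast
    show "card (\<phi> ` fst (Fbb m E a)) = card (fst (Fbb m E b))"
      using inj by (simp add: card_image card_verts)
  qed
  have nonadj: "\<not> adj ?B Zr Wr" by (simp add: adj_def arcs_simps)
  have notBase: "\<And>x y. x \<in> fst (Fbb m E a) \<Longrightarrow> y \<in> fst (Fbb m E a) \<Longrightarrow> x \<noteq> y \<Longrightarrow>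
      \<phi> x = Zr \<Longrightarrow> \<phi> y = Wr \<Longrightarrow> x \<in> {Zr, Wr} \<and> y \<in> {Zr, Wr}"
  proof -
    fix x y assume x: "x \<in> fst (Fbb m E a)" and y: "y \<in> fst (Fbb m E a)" and ne: "x \<noteq> y"
      and px: "\<phi> x = Zr" and py: "\<phi> y = Wr"
    have na1: "\<not> adj ?A x y" using adjB[of x y] px py nonadj by auto
    have na2: "\<not> adj ?A y x" using adjB[of y x] px py nonadj by (auto simp: adj_def)
    note na = na1 na2
    have nx: "x \<noteq> Base u" for u
    proof
      assume xu: "x = Base u"
      then have "u \<in> {1..m}" using x unfolding verts by auto
      then show False using adjBase[of u y] y ne xu na by auto
    qed
    have ny: "y \<noteq> Base u" for u
    proof
      assume yu: "y = Base u"
      then have "u \<in> {1..m}" using y unfolding verts by auto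
      then show False using adjBase[of u x] x ne yu na by auto
    qed
    show "x \<in> {Zr, Wr} \<and> y \<in> {Zr, Wr}"
      using nx ny by (cases x; cases y) auto
  qed
  have "Zr \<in> \<phi> ` fst (Fbb m E a)" unfolding img by (simp add: verts)
  then obtain x where x: "x \<in> fst (Fbb m E a)" "\<phi> x = Zr" by (elim imageE) simp
  have "Wr \<in> \<phi> ` fst (Fbb m E a)" unfolding img by (simp add: verts)
  then obtain y where y: "y \<in> fst (Fbb m E a)" "\<phi> y = Wr" by (elim imageE) simp
  have "x \<noteq> y" using x(2) y(2) by auto
  then have xy: "x \<in> {Zr, Wr} \<and> y \<in> {Zr, Wr}" by (rule notBase[OF x(1) y(1) _ x(2) y(2)])
  have injb: "inj_on (\<lambda>v. \<phi> (Base v)) S" if "S \<subseteq> {1..m}" for S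
  proof -
    have "Base ` S \<subseteq> fst (Fbb m E a)" using that unfolding verts by blast
    then have "inj_on \<phi> (Base ` S)" using inj_on_subset[OF inj] by blast
    moreover have "inj_on Base S" by (simp add: inj_on_def)
    ultimately have "inj_on (\<phi> \<circ> Base) S" by (rule comp_inj_on[rotated])
    then show ?thesis by (simp add: comp_def)
  qed
  have cardle: "card S \<le> card T" if S: "S \<subseteq> {1..m}" and T: "finite T"
      and h: "\<And>v. v \<in> S \<Longrightarrow> \<phi> (Base v) \<in> Base ` T" for S T
  proof -
    have "card ((\<lambda>v. \<phi> (Base v)) ` S) \<le> card (Base ` T)"
      using h T by (intro card_mono) auto
    moreover have "card ((\<lambda>v. \<phi> (Base v)) ` S) = card S" using injb[OF S] by (simp add: card_image)
    moreover have "card (Base ` T) = card T" by (simp add: card_image inj_on_def)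
    ultimately show ?thesis by simp
  qed
  show False
  proof (cases "\<phi> Zr = Zr")
    case True
    have h1: "\<phi> (Base v) \<in> Base ` {1..b}" if "v \<in> {1..a}" for v
    proof -
      have "(Zr, Base v) \<in> ?A" using that by (simp add: arcs_simps)
      then have "(Zr, \<phi> (Base v)) \<in> ?B" using arc[of Zr "Base v"] True by simp
      then show ?thesis by (cases "\<phi> (Base v)") (auto simp: arcs_simps)
    qed
    have h2: "\<phi> (Base v) \<in> Base ` {b<..m}" if "v \<in> {a<..m}" for v
    proof -
      have "(Base v, Zr) \<in> ?A" using that by (simp add: arcs_simps)
      then have "(\<phi> (Base v), Zr) \<in> ?B" using arc[of "Base v" Zr] True by simp
      then show ?thesis by (cases "\<phi> (Base v)") (auto simp: arcs_simps)
    qed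
    have "card {1..a} \<le> card {1..b}" by (rule cardle[OF _ _ h1]) (use am in auto)
    moreover have "card {a<..m} \<le> card {b<..m}" by (rule cardle[OF _ _ h2]) auto
    ultimately show False using ab am bm by simp
  next
    case False
    then have W: "\<phi> Zr = Wr" using x(2) y(2) xy by auto
    have h1: "\<phi> (Base v) \<in> Base ` {b<..m}" if "v \<in> {1..a}" for v
    proof -
      have "(Zr, Base v) \<in> ?A" using that by (simp add: arcs_simps)
      then have "(Wr, \<phi> (Base v)) \<in> ?B" using arc[of Zr "Base v"] W by simp
      then show ?thesis by (cases "\<phi> (Base v)") (auto simp: arcs_simps)
    qed
    have "card {1..a} \<le> card {b<..m}" by (rule cardle[OF _ _ h1]) (use am in auto)
    then show False using abm bm by simp
  qed
qed

lemma kdec: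
  fixes k :: "nat \<Rightarrow> nat"
  assumes "\<forall>t. 1 \<le> t \<and> t < s \<longrightarrow> k t > k (Suc t) + 1"
  shows "1 \<le> t \<Longrightarrow> t + d + 1 \<le> s \<Longrightarrow> k (t + d + 1) < k t"
proof (induction d)
  case 0
  then have "t < s" by simp
  then have "k (Suc t) + 1 < k t" using assms 0 by blast
  then show ?case by simp
next
  case (Suc d)
  then have "k (t + d + 1) < k t" by simp
  moreover have "k (t + Suc d + 1) < k (t + d + 1)"
  proof -
    have "1 \<le> t + d + 1" "t + d + 1 < s" using Suc.prems by auto
    then have "k (Suc (t + d + 1)) + 1 < k (t + d + 1)" using assms by blast
    then show ?thesis by simp
  qed
  ultimately show ?case by simp
qed

theorem claim4p5:
  fixes s m :: nat and E :: "(nat \<times> nat) set" and k :: "nat \<Rightarrow> nat" and i j :: nat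
  assumes "s \<ge> 1" and "m \<ge> 1"
    and "F0_ok m E"
    and "\<forall>t\<in>{1..s}. 2 * real m / 3 + 2 < real (k t) \<and> real (k t) < 5 * real m / 6"
    and "\<forall>t. 1 \<le> t \<and> t < s \<longrightarrow> k t > k (Suc t) + 1"
    and "i \<in> {1..s}" and "j \<in> {1..s}" and "i \<noteq> j"
  shows "\<not> (\<exists>\<phi>. is_hom (Fbb m E (k i)) (Fbb m E (k j)) \<phi>)"
proof
  assume "\<exists>\<phi>. is_hom (Fbb m E (k i)) (Fbb m E (k j)) \<phi>"
  then obtain \<phi> where hom: "is_hom (Fbb m E (k i)) (Fbb m E (k j)) \<phi>" by blast
  have tour: "is_tournament {1..m} E" using assms(3) unfolding F0_ok_def by blast
  have ri: "2 * real m / 3 + 2 < real (k i)" "real (k i) < 5 * real m / 6" using assms(4,6) by auto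
  have rj: "2 * real m / 3 + 2 < real (k j)" "real (k j) < 5 * real m / 6" using assms(4,7) by auto
  have ne: "k i \<noteq> k j"
  proof (cases "i < j")
    case True
    then have "k (i + (j - i - 1) + 1) < k i" using kdec[OF assms(5), of i "j - i - 1"] assms(6,7) by auto
    then show ?thesis using True by simp
  next
    case False
    then have "j < i" using assms(8) by simp
    then have "k (j + (i - j - 1) + 1) < k j" using kdec[OF assms(5), of j "i - j - 1"] assms(6,7) by auto
    then show ?thesis using \<open>j < i\<close> by simp
  qed
  have h1: "1 \<le> k i" using ri by linarith
  have h2: "k i \<le> m" using ri by linarith
  have h3: "k j \<le> m" using rj by linarith
  have h4: "k i + k j > m" using ri rj by linarith
  show False by (rule core[OF tour h1 h2 h3 ne h4 hom])
qed

end
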